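(* Let $T$ be a regular tournament of order $2n+1$, let $S\subseteq V(T)$ with $k=|S|$, and let $x,y$ be two distinct vertices in $V(T)\setminus S$. Then: (i) If $n\geq 3$ and $k\leq \frac{1}{3}(n-1)$, then $T-S$ contains an $(x,y)$-path of length $3$, unless $T$ is isomorphic to a tournament from $\mathcal G$. (ii) If $n\geq 5$, $k\leq \frac{1}{2}n$, and $T-S$ contains no $(x,y)$-path of length $3$, then $T-S$ contains an $(x,y)$-path of length $4$.
   Context: A tournament is regular if every vertex has outdegree equal to indegree. $T-S$ is the subtournament induced by $V(T)\setminus S$. Paths are directed and simple; length = number of arcs. The family $\mathcal G$ consists of the regular tournaments of order $6k+3\geq 9$ whose vertex set is partitioned as $\{x,y,z\}\cup A\cup B\cup C\cup S$ with $|A|=|C|=2k-1$, $|B|=k+2$, $|S|=k$, such that the subtournaments induced by $A$, by $C$ and by $\{z\}\cup B\cup S$ are regular, and (writing $X\to Y$ for "every vertex of $X$ dominates every vertex of $Y$") $A\to B\cup S$, $B\cup S\to C$, $C\to A$, $C\to z$, $z\to A$, $x\to \{y,z\}\cup A\cup S$, $\{x,z\}\cup C\cup S\to y$, $y\to A\cup B$, and $B\cup C\to x$. *)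

theory Defs
  imports Main
begin

text \<open>A tournament on a finite vertex set V with arc relation E
  (E u v means u dominates v). Arcs only between vertices of V.\<close>
definition tournament :: "'a set \<Rightarrow> ('a \<Rightarrow> 'a \<Rightarrow> bool) \<Rightarrow> bool" where
  "tournament V E \<longleftrightarrow> finite V
     \<and> (\<forall>u v. E u v \<longrightarrow> u \<in> V \<and> v \<in> V)
     \<and> (\<forall>v. \<not> E v v)
     \<and> (\<forall>u\<in>V. \<forall>v\<in>V. u \<noteq> v \<longrightarrow> (E u v \<longleftrightarrow> \<not> E v u))"

definition regular_on :: "'a set \<Rightarrow> ('a \<Rightarrow> 'a \<Rightarrow> bool) \<Rightarrow> bool" where
  "regular_on W E \<longleftrightarrow> (\<forall>v\<in>W. card {w\<in>W. E v w} = card {w\<in>W. E w v})"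

definition regular_tournament :: "'a set \<Rightarrow> ('a \<Rightarrow> 'a \<Rightarrow> bool) \<Rightarrow> bool" where
  "regular_tournament V E \<longleftrightarrow> tournament V E \<and> regular_on V E"

definition dominates :: "('a \<Rightarrow> 'a \<Rightarrow> bool) \<Rightarrow> 'a set \<Rightarrow> 'a set \<Rightarrow> bool" where
  "dominates E X Y \<longleftrightarrow> (\<forall>u\<in>X. \<forall>v\<in>Y. E u v)"

definition has_path3 :: "'a set \<Rightarrow> ('a \<Rightarrow> 'a \<Rightarrow> bool) \<Rightarrow> 'a set \<Rightarrow> 'a \<Rightarrow> 'a \<Rightarrow> bool" where
  "has_path3 V E S x y \<longleftrightarrow> (\<exists>a b. distinct [x, a, b, y] \<and> set [x, a, b, y] \<subseteq> V - S
      \<and> E x a \<and> E a b \<and> E b y)"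

definition has_path4 :: "'a set \<Rightarrow> ('a \<Rightarrow> 'a \<Rightarrow> bool) \<Rightarrow> 'a set \<Rightarrow> 'a \<Rightarrow> 'a \<Rightarrow> bool" where
  "has_path4 V E S x y \<longleftrightarrow> (\<exists>a b c. distinct [x, a, b, c, y] \<and> set [x, a, b, c, y] \<subseteq> V - S
      \<and> E x a \<and> E a b \<and> E b c \<and> E c y)"

definition in_family_G :: "'a set \<Rightarrow> ('a \<Rightarrow> 'a \<Rightarrow> bool) \<Rightarrow> bool" where
  "in_family_G V E \<longleftrightarrow> regular_tournament V E \<and>
    (\<exists>(k::nat) x y z A B C S.
       6 * k + 3 \<ge> 9 \<and> card V = 6 * k + 3 \<and>
       V = {x, y, z} \<union> A \<union> B \<union> C \<union> S \<and>
       distinct [x, y, z] \<and> {x, y, z} \<inter> (A \<union> B \<union> C \<union> S) = {} \<and>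
       A \<inter> B = {} \<and> A \<inter> C = {} \<and> A \<inter> S = {} \<and>
       B \<inter> C = {} \<and> B \<inter> S = {} \<and> C \<inter> S = {} \<and>
       card A = 2 * k - 1 \<and> card C = 2 * k - 1 \<and> card B = k + 2 \<and> card S = k \<and>
       regular_on A E \<and> regular_on C E \<and> regular_on ({z} \<union> B \<union> S) E \<and>
       dominates E A (B \<union> S) \<and> dominates E (B \<union> S) C \<and> dominates E C A \<and>
       dominates E C {z} \<and> dominates E {z} A \<and>
       dominates E {x} ({y, z} \<union> A \<union> S) \<and>
       dominates E ({x, z} \<union> C \<union> S) {y} \<and>
       dominates E {y} (A \<union> B) \<and> dominates E (B \<union> C) {x})"

definition tournament_iso :: "'a set \<Rightarrow> ('a \<Rightarrow> 'a \<Rightarrow> bool) \<Rightarrow> 'b set \<Rightarrow> ('b \<Rightarrow> 'b \<Rightarrow> bool) \<Rightarrow> bool" where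
  "tournament_iso V E V' E' \<longleftrightarrow>
     (\<exists>f. bij_betw f V V' \<and> (\<forall>u\<in>V. \<forall>v\<in>V. E u v \<longleftrightarrow> E' (f u) (f v)))"

text \<open>T is isomorphic to a tournament from \<G> (representatives taken on nat,
  which suffices since all members are finite).\<close>
definition iso_to_family_G :: "'a set \<Rightarrow> ('a \<Rightarrow> 'a \<Rightarrow> bool) \<Rightarrow> bool" where
  "iso_to_family_G V E \<longleftrightarrow>
     (\<exists>(V'::nat set) E'. in_family_G V' E' \<and> tournament_iso V E V' E')"

end

theory Submission
  imports Defs
begin

lemma tour_sum:
  assumes "finite W" "\<forall>v. \<not> E v v" "\<forall>u\<in>W. \<forall>v\<in>W. u \<noteq> v \<longrightarrow> (E u v \<longleftrightarrow> \<not> E v u)"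
  shows "2 * (\<Sum>v\<in>W. card {u\<in>W. E u v}) = card W * (card W - 1)"
  using assms(1,3)
proof (induction W rule: finite_induct)
  case empty
  then show ?case by simp
next
  case (insert w F)
  have totF: "\<forall>u\<in>F. \<forall>v\<in>F. u \<noteq> v \<longrightarrow> (E u v \<longleftrightarrow> \<not> E v u)"
    using insert.prems by (meson insertCI)
  have IH: "2 * (\<Sum>v\<in>F. card {u\<in>F. E u v}) = card F * (card F - 1)"
    using insert.IH totF by blast
  have "{u\<in>insert w F. E u w} = {u\<in>F. E u w}" using assms(2) by auto
  then have c1: "card {u\<in>insert w F. E u w} = card {u\<in>F. E u w}" by simp
  have c2: "\<And>v. v \<in> F \<Longrightarrow> card {u\<in>insert w F. E u v} = card {u\<in>F. E u v} + (if E w v then 1 else 0)"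
  proof -
    fix v assume v: "v \<in> F"
    show "card {u\<in>insert w F. E u v} = card {u\<in>F. E u v} + (if E w v then 1 else 0)"
    proof (cases "E w v")
      case True
      then have "{u\<in>insert w F. E u v} = insert w {u\<in>F. E u v}" by auto
      then show ?thesis using True insert(1,2) by simp
    next
      case False
      then have "{u\<in>insert w F. E u v} = {u\<in>F. E u v}" by auto
      then show ?thesis using False by simp
    qed
  qed
  have s: "(\<Sum>v\<in>F. card {u\<in>insert w F. E u v}) = (\<Sum>v\<in>F. card {u\<in>F. E u v}) + (\<Sum>v\<in>F. (if E w v then 1 else 0))"
    using c2 by (simp add: sum.distrib)
  have s2: "(\<Sum>v\<in>F. (if E w v then 1 else 0::nat)) = card {v\<in>F. E w v}"
    using insert(1) by (simp add: sum.If_cases Int_def)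
  have un1: "{u\<in>F. E u w} \<union> {v\<in>F. E w v} = F"
  proof -
    have "\<And>u. u \<in> F \<Longrightarrow> E u w \<or> E w u"
    proof -
      fix u assume "u \<in> F"
      then have "u \<noteq> w" using insert(2) by auto
      then show "E u w \<or> E w u" using insert.prems \<open>u \<in> F\<close> by (meson insertCI)
    qed
    then show ?thesis by auto
  qed
  have un2: "{u\<in>F. E u w} \<inter> {v\<in>F. E w v} = {}"
  proof -
    have "\<And>u. u \<in> F \<Longrightarrow> E u w \<Longrightarrow> E w u \<Longrightarrow> False"
    proof -
      fix u assume "u \<in> F" "E u w" "E w u"
      then have "u \<noteq> w" using insert(2) by auto
      then show False using insert.prems \<open>u \<in> F\<close> \<open>E u w\<close> \<open>E w u\<close> by (meson insertCI)
    qed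
    then show ?thesis by auto
  qed
  have "card ({u\<in>F. E u w} \<union> {v\<in>F. E w v}) = card {u\<in>F. E u w} + card {v\<in>F. E w v}"
    by (rule card_Un_disjoint) (use insert(1) un2 in auto)
  then have s3: "card {u\<in>F. E u w} + card {v\<in>F. E w v} = card F"
    using un1 by simp
  have "(\<Sum>v\<in>insert w F. card {u\<in>insert w F. E u v}) = card {u\<in>insert w F. E u w} + (\<Sum>v\<in>F. card {u\<in>insert w F. E u v})"
    using insert(1,2) by simp
  then have "(\<Sum>v\<in>insert w F. card {u\<in>insert w F. E u v}) = (\<Sum>v\<in>F. card {u\<in>F. E u v}) + card F"
    using s s2 s3 c1 by simp
  moreover have "card (insert w F) = Suc (card F)" using insert(1,2) by simp
  ultimately show ?case using IH
    by (cases "card F") (simp_all add: algebra_simps)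
qed

lemma exists_big_in:
  assumes "finite W" "W \<noteq> {}" "\<forall>v. \<not> E v v" "\<forall>u\<in>W. \<forall>v\<in>W. u \<noteq> v \<longrightarrow> (E u v \<longleftrightarrow> \<not> E v u)"
  shows "\<exists>v\<in>W. card W \<le> 2 * card {u\<in>W. E u v} + 1"
proof (rule ccontr)
  assume "\<not> ?thesis"
  then have h: "\<forall>v\<in>W. 2 * card {u\<in>W. E u v} + 2 \<le> card W" by (simp add: not_le Suc_le_eq)
  obtain w where "w \<in> W" using assms(2) by auto
  then have cW: "card W \<ge> 2" using h by auto
  have "(\<Sum>v\<in>W. 2 * card {u\<in>W. E u v}) \<le> (\<Sum>v\<in>W. card W - 2)"
    by (rule sum_mono) (use h in auto)
  then have "2 * (\<Sum>v\<in>W. card {u\<in>W. E u v}) \<le> card W * (card W - 2)"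
    by (simp add: sum_distrib_left)
  then have "card W * (card W - 1) \<le> card W * (card W - 2)" using tour_sum[OF assms(1,3,4)] by simp
  then have "card W - 1 \<le> card W - 2" using cW by simp
  then show False using cW by linarith
qed

lemma exists_big_out:
  assumes "finite W" "W \<noteq> {}" "\<forall>v. \<not> E v v" "\<forall>u\<in>W. \<forall>v\<in>W. u \<noteq> v \<longrightarrow> (E u v \<longleftrightarrow> \<not> E v u)"
  shows "\<exists>v\<in>W. card W \<le> 2 * card {u\<in>W. E v u} + 1"
proof -
  have "\<exists>v\<in>W. card W \<le> 2 * card {u\<in>W. (\<lambda>a b. E b a) u v} + 1"
  proof (rule exists_big_in)
    show "finite W" "W \<noteq> {}" using assms by auto
    show "\<forall>v. \<not> E v v" using assms by auto
    show "\<forall>u\<in>W. \<forall>v\<in>W. u \<noteq> v \<longrightarrow> ((\<lambda>a b. E b a) u v \<longleftrightarrow> \<not> (\<lambda>a b. E b a) v u)"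
    proof (intro ballI impI)
      fix u v assume "u \<in> W" "v \<in> W" "u \<noteq> v"
      then have "E v u \<longleftrightarrow> \<not> E u v" using assms(4) by metis
      then show "(\<lambda>a b. E b a) u v \<longleftrightarrow> \<not> (\<lambda>a b. E b a) v u" by simp
    qed
  qed
  then show ?thesis by simp
qed

lemma card_out_in:
  assumes "finite V" "\<forall>v. \<not> E v v" "\<forall>u\<in>V. \<forall>v\<in>V. u \<noteq> v \<longrightarrow> (E u v \<longleftrightarrow> \<not> E v u)" "v \<in> V"
  shows "card {u\<in>V. E v u} + card {u\<in>V. E u v} = card V - 1"
proof -
  have tot: "\<And>u. u \<in> V \<Longrightarrow> u \<noteq> v \<Longrightarrow> E v u \<longleftrightarrow> \<not> E u v"
  proof -
    fix u assume "u \<in> V" "u \<noteq> v"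
    then show "E v u \<longleftrightarrow> \<not> E u v" using assms(3) assms(4) by metis
  qed
  have un1: "{u\<in>V. E v u} \<union> {u\<in>V. E u v} = V - {v}"
    using tot assms(2) by blast
  have un2: "{u\<in>V. E v u} \<inter> {u\<in>V. E u v} = {}"
    using tot assms(2) by blast
  have "card ({u\<in>V. E v u} \<union> {u\<in>V. E u v}) = card {u\<in>V. E v u} + card {u\<in>V. E u v}"
    by (rule card_Un_disjoint) (simp_all add: assms(1) un2)
  then show ?thesis using un1 assms(1,4) by simp
qed

lemma tour_sum_out:
  assumes "finite W" "\<forall>v. \<not> E v v" "\<forall>u\<in>W. \<forall>v\<in>W. u \<noteq> v \<longrightarrow> (E u v \<longleftrightarrow> \<not> E v u)"
  shows "2 * (\<Sum>v\<in>W. card {u\<in>W. E v u}) = card W * (card W - 1)"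
proof -
  have "2 * (\<Sum>v\<in>W. card {u\<in>W. (\<lambda>a b. E b a) u v}) = card W * (card W - 1)"
  proof (rule tour_sum)
    show "finite W" using assms by auto
    show "\<forall>v. \<not> E v v" using assms by auto
    show "\<forall>u\<in>W. \<forall>v\<in>W. u \<noteq> v \<longrightarrow> ((\<lambda>a b. E b a) u v \<longleftrightarrow> \<not> (\<lambda>a b. E b a) v u)"
    proof (intro ballI impI)
      fix u v assume "u \<in> W" "v \<in> W" "u \<noteq> v"
      then have "E v u \<longleftrightarrow> \<not> E u v" using assms(3) by metis
      then show "(\<lambda>a b. E b a) u v \<longleftrightarrow> \<not> (\<lambda>a b. E b a) v u" by simp
    qed
  qed
  then show ?thesis by simp
qed

lemma tot_mono:
  assumes "\<forall>u\<in>V. \<forall>v\<in>V. u \<noteq> v \<longrightarrow> (E u v \<longleftrightarrow> \<not> E v u)" "W \<subseteq> V"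
  shows "\<forall>u\<in>W. \<forall>v\<in>W. u \<noteq> v \<longrightarrow> (E u v \<longleftrightarrow> \<not> E v u)"
proof (intro ballI impI)
  fix u v assume "u \<in> W" "v \<in> W" "u \<noteq> v"
  then have "u \<in> V" "v \<in> V" using assms(2) by auto
  then show "E u v \<longleftrightarrow> \<not> E v u" using assms(1) \<open>u \<noteq> v\<close> by metis
qed

lemma card_Un3:
  assumes "finite A" "finite B" "finite C" "A \<inter> B = {}" "A \<inter> C = {}" "B \<inter> C = {}"
  shows "card (A \<union> B \<union> C) = card A + card B + card C"
proof -
  have "card (A \<union> B) = card A + card B" using assms by (simp add: card_Un_disjoint)
  moreover have "(A \<union> B) \<inter> C = {}" using assms by auto
  ultimately show ?thesis using assms by (simp add: card_Un_disjoint)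
qed

lemma card_Un4:
  assumes "finite A" "finite B" "finite C" "finite D" "A \<inter> B = {}" "A \<inter> C = {}" "B \<inter> C = {}"
    "A \<inter> D = {}" "B \<inter> D = {}" "C \<inter> D = {}"
  shows "card (A \<union> B \<union> C \<union> D) = card A + card B + card C + card D"
proof -
  have "card (A \<union> B \<union> C) = card A + card B + card C" using assms by (simp add: card_Un3)
  moreover have "(A \<union> B \<union> C) \<inter> D = {}" using assms by auto
  ultimately show ?thesis using assms by (simp add: card_Un_disjoint)
qed


lemma transport_G:
  assumes G: "in_family_G V E" and inj: "inj_on f V"
  defines "E' \<equiv> (\<lambda>u v. \<exists>a\<in>V. \<exists>b\<in>V. u = f a \<and> v = f b \<and> E a b)"
  shows "in_family_G (f ` V) E'"
proof -
  have RT: "regular_tournament V E" using G unfolding in_family_G_def by (rule conjunct1)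
  have T: "tournament V E" and RG: "regular_on V E" using RT unfolding regular_tournament_def by auto
  have fin: "finite V" and arcV: "\<forall>u v. E u v \<longrightarrow> u\<in>V \<and> v\<in>V" and irr: "\<forall>v. \<not>E v v"
    and tot: "\<forall>u\<in>V. \<forall>v\<in>V. u\<noteq>v \<longrightarrow> (E u v \<longleftrightarrow> \<not>E v u)" using T unfolding tournament_def by blast+
  have E'iff: "\<And>a b. a \<in> V \<Longrightarrow> b \<in> V \<Longrightarrow> E' (f a) (f b) \<longleftrightarrow> E a b"
    unfolding E'_def using inj by (auto dest: inj_onD)
  have E'V: "\<And>u v. E' u v \<Longrightarrow> u \<in> f ` V \<and> v \<in> f ` V" unfolding E'_def by auto
  have outset: "\<And>W v. W \<subseteq> V \<Longrightarrow> v \<in> V \<Longrightarrow> {w\<in>f ` W. E' (f v) w} = f ` {w\<in>W. E v w}"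
    using E'iff by auto
  have inset: "\<And>W v. W \<subseteq> V \<Longrightarrow> v \<in> V \<Longrightarrow> {w\<in>f ` W. E' w (f v)} = f ` {w\<in>W. E w v}"
    using E'iff by auto
  have cardim: "\<And>W. W \<subseteq> V \<Longrightarrow> card (f ` W) = card W"
    using inj by (meson card_image inj_on_subset)
  have regT: "\<And>W. W \<subseteq> V \<Longrightarrow> regular_on W E \<Longrightarrow> regular_on (f ` W) E'"
  proof -
    fix W assume W: "W \<subseteq> V" "regular_on W E"
    show "regular_on (f ` W) E'" unfolding regular_on_def
    proof
      fix v' assume "v' \<in> f ` W"
      then obtain v where v: "v \<in> W" "v' = f v" by auto
      have vV: "v \<in> V" using v(1) W(1) by auto
      have sub1: "{w\<in>W. E v w} \<subseteq> V" "{w\<in>W. E w v} \<subseteq> V" using W(1) by auto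
      have "card {w\<in>f ` W. E' v' w} = card {w\<in>W. E v w}"
        using outset[OF W(1) vV] v cardim[OF sub1(1)] by simp
      moreover have "card {w\<in>f ` W. E' w v'} = card {w\<in>W. E w v}"
        using inset[OF W(1) vV] v cardim[OF sub1(2)] by simp
      ultimately show "card {w\<in>f ` W. E' v' w} = card {w\<in>f ` W. E' w v'}"
        using W(2) v(1) unfolding regular_on_def by auto
    qed
  qed
  have domT: "\<And>P Q. P \<subseteq> V \<Longrightarrow> Q \<subseteq> V \<Longrightarrow> dominates E P Q \<Longrightarrow> dominates E' (f ` P) (f ` Q)"
  proof -
    fix P Q assume PQ: "P \<subseteq> V" "Q \<subseteq> V" "dominates E P Q"
    show "dominates E' (f ` P) (f ` Q)" unfolding dominates_def
    proof (intro ballI)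
      fix u v assume "u \<in> f ` P" "v \<in> f ` Q"
      then obtain a b where ab: "a \<in> P" "b \<in> Q" "u = f a" "v = f b" by auto
      then have "E a b" using PQ(3) unfolding dominates_def by blast
      moreover have "a \<in> V" "b \<in> V" using ab PQ by auto
      ultimately show "E' u v" using E'iff ab by simp
    qed
  qed
  have tourT: "tournament (f ` V) E'"
    unfolding tournament_def
  proof (intro conjI allI impI ballI)
    show "finite (f ` V)" using fin by auto
  next
    fix u v assume "E' u v" then show "u \<in> f ` V" "v \<in> f ` V" using E'V by auto
  next
    fix v show "\<not> E' v v" unfolding E'_def using inj irr by (auto dest: inj_onD)
  next
    fix u v assume "u \<in> f ` V" "v \<in> f ` V" "u \<noteq> v"
    then obtain a b where ab: "a \<in> V" "b \<in> V" "u = f a" "v = f b" by auto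
    then have "a \<noteq> b" using \<open>u \<noteq> v\<close> by auto
    then have "E a b \<longleftrightarrow> \<not> E b a" using tot ab(1,2) by metis
    then show "E' u v = (\<not> E' v u)" using E'iff ab by simp
  qed
  obtain k x y z A B C S where H:
       "6 * k + 3 \<ge> 9" "card V = 6 * k + 3"
       "V = {x, y, z} \<union> A \<union> B \<union> C \<union> S"
       "distinct [x, y, z]" "{x, y, z} \<inter> (A \<union> B \<union> C \<union> S) = {}"
       "A \<inter> B = {}" "A \<inter> C = {}" "A \<inter> S = {}"
       "B \<inter> C = {}" "B \<inter> S = {}" "C \<inter> S = {}"
       "card A = 2 * k - 1" "card C = 2 * k - 1" "card B = k + 2" "card S = k"
       "regular_on A E" "regular_on C E" "regular_on ({z} \<union> B \<union> S) E"
       "dominates E A (B \<union> S)" "dominates E (B \<union> S) C" "dominates E C A"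
       "dominates E C {z}" "dominates E {z} A"
       "dominates E {x} ({y, z} \<union> A \<union> S)"
       "dominates E ({x, z} \<union> C \<union> S) {y}"
       "dominates E {y} (A \<union> B)" "dominates E (B \<union> C) {x}"
    using G unfolding in_family_G_def
    apply -
    apply (elim conjE exE)
    apply (rule that)
                       apply assumption+
    done
  have sub: "{x,y,z} \<subseteq> V" "A \<subseteq> V" "B \<subseteq> V" "C \<subseteq> V" "S \<subseteq> V" using H(3) by auto
  have disj: "\<And>P Q. P \<subseteq> V \<Longrightarrow> Q \<subseteq> V \<Longrightarrow> P \<inter> Q = {} \<Longrightarrow> f ` P \<inter> f ` Q = {}"
    using inj by (metis image_empty inj_on_image_Int)
  show ?thesis unfolding in_family_G_def
  proof (intro conjI)
    show "regular_tournament (f ` V) E'" unfolding regular_tournament_def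
      using tourT regT[OF order.refl RG] by auto
    show "\<exists>k x y z A B C S. 9 \<le> 6 * k + 3 \<and> card (f ` V) = 6 * k + 3 \<and>
       f ` V = {x, y, z} \<union> A \<union> B \<union> C \<union> S \<and>
       distinct [x, y, z] \<and> {x, y, z} \<inter> (A \<union> B \<union> C \<union> S) = {} \<and>
       A \<inter> B = {} \<and> A \<inter> C = {} \<and> A \<inter> S = {} \<and>
       B \<inter> C = {} \<and> B \<inter> S = {} \<and> C \<inter> S = {} \<and>
       card A = 2 * k - 1 \<and> card C = 2 * k - 1 \<and> card B = k + 2 \<and> card S = k \<and>
       regular_on A E' \<and> regular_on C E' \<and> regular_on ({z} \<union> B \<union> S) E' \<and>
       dominates E' A (B \<union> S) \<and> dominates E' (B \<union> S) C \<and> dominates E' C A \<and>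
       dominates E' C {z} \<and> dominates E' {z} A \<and>
       dominates E' {x} ({y, z} \<union> A \<union> S) \<and>
       dominates E' ({x, z} \<union> C \<union> S) {y} \<and>
       dominates E' {y} (A \<union> B) \<and> dominates E' (B \<union> C) {x}"
    proof (intro exI conjI)
      show "9 \<le> 6 * k + 3" by (rule H(1))
      show "card (f ` V) = 6 * k + 3" using cardim[of V] H(2) by simp
      show "f ` V = {f x, f y, f z} \<union> f ` A \<union> f ` B \<union> f ` C \<union> f ` S" using H(3) by auto
      show "distinct [f x, f y, f z]" using H(4) sub(1) inj by (auto dest: inj_onD)
      show "{f x, f y, f z} \<inter> (f ` A \<union> f ` B \<union> f ` C \<union> f ` S) = {}"
        using disj[of "{x,y,z}" "A \<union> B \<union> C \<union> S"] H(3,5) by auto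
      show "f ` A \<inter> f ` B = {}" using disj sub H(6) by blast
      show "f ` A \<inter> f ` C = {}" using disj sub H(7) by blast
      show "f ` A \<inter> f ` S = {}" using disj sub H(8) by blast
      show "f ` B \<inter> f ` C = {}" using disj sub H(9) by blast
      show "f ` B \<inter> f ` S = {}" using disj sub H(10) by blast
      show "f ` C \<inter> f ` S = {}" using disj sub H(11) by blast
      show "card (f ` A) = 2 * k - 1" using cardim sub H(12) by simp
      show "card (f ` C) = 2 * k - 1" using cardim sub H(13) by simp
      show "card (f ` B) = k + 2" using cardim sub H(14) by simp
      show "card (f ` S) = k" using cardim sub H(15) by simp
      show "regular_on (f ` A) E'" using regT sub H(16) by blast
      show "regular_on (f ` C) E'" using regT sub H(17) by blast
      show "regular_on ({f z} \<union> f ` B \<union> f ` S) E'"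
        using regT[of "{z} \<union> B \<union> S"] sub H(18) by (simp add: image_Un)
      show "dominates E' (f ` A) (f ` B \<union> f ` S)"
        using domT[of A "B \<union> S"] sub H(19) by (simp add: image_Un)
      show "dominates E' (f ` B \<union> f ` S) (f ` C)"
        using domT[of "B \<union> S" C] sub H(20) by (simp add: image_Un)
      show "dominates E' (f ` C) (f ` A)"
        using domT[of C A] sub H(21) by (simp add: image_Un)
      show "dominates E' (f ` C) {f z}"
        using domT[of C "{z}"] sub H(22) by (simp add: image_Un)
      show "dominates E' {f z} (f ` A)"
        using domT[of "{z}" A] sub H(23) by (simp add: image_Un)
      show "dominates E' {f x} ({f y, f z} \<union> f ` A \<union> f ` S)"
        using domT[of "{x}" "{y, z} \<union> A \<union> S"] sub H(24) by (simp add: image_Un)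
      show "dominates E' ({f x, f z} \<union> f ` C \<union> f ` S) {f y}"
        using domT[of "{x, z} \<union> C \<union> S" "{y}"] sub H(25) by (simp add: image_Un)
      show "dominates E' {f y} (f ` A \<union> f ` B)"
        using domT[of "{y}" "A \<union> B"] sub H(26) by (simp add: image_Un)
      show "dominates E' (f ` B \<union> f ` C) {f x}"
        using domT[of "B \<union> C" "{x}"] sub H(27) by (simp add: image_Un)
    qed
  qed
qed

lemma family_iso:
  assumes "in_family_G V E"
  shows "iso_to_family_G V E"
proof -
  have fin: "finite V" using assms unfolding in_family_G_def regular_tournament_def tournament_def by auto
  obtain f :: "'a \<Rightarrow> nat" where inj: "inj_on f V"
    using finite_imp_inj_to_nat_seg[OF fin] by blast
  define E' where "E' \<equiv> (\<lambda>u v. \<exists>a\<in>V. \<exists>b\<in>V. u = f a \<and> v = f b \<and> E a b)"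
  have "in_family_G (f ` V) E'" using transport_G[OF assms inj] unfolding E'_def by simp
  moreover have "tournament_iso V E (f ` V) E'"
    unfolding tournament_iso_def
  proof (intro exI conjI)
    show "bij_betw f V (f ` V)" using inj by (simp add: bij_betw_def)
    show "\<forall>u\<in>V. \<forall>v\<in>V. E u v = E' (f u) (f v)"
      unfolding E'_def using inj by (auto dest: inj_onD)
  qed
  ultimately show ?thesis unfolding iso_to_family_G_def by blast
qed


theorem lemma3p2:
  fixes V :: "'a set" and E :: "'a \<Rightarrow> 'a \<Rightarrow> bool" and S :: "'a set"
    and x y :: 'a and n :: nat
  assumes "regular_tournament V E"
    and "card V = 2 * n + 1"
    and "S \<subseteq> V"
    and "x \<in> V - S" and "y \<in> V - S" and "x \<noteq> y"
  shows "(n \<ge> 3 \<and> 3 * card S \<le> n - 1 \<longrightarrow>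
            has_path3 V E S x y \<or> iso_to_family_G V E)
       \<and> (n \<ge> 5 \<and> 2 * card S \<le> n \<and> \<not> has_path3 V E S x y \<longrightarrow>
            has_path4 V E S x y)"
proof -
  have T: "tournament V E" and RG: "regular_on V E"
    using assms(1) unfolding regular_tournament_def by auto
  have fin: "finite V" and arcV: "\<forall>u v. E u v \<longrightarrow> u\<in>V \<and> v\<in>V" and irr: "\<forall>v. \<not>E v v"
    and tot: "\<forall>u\<in>V. \<forall>v\<in>V. u\<noteq>v \<longrightarrow> (E u v \<longleftrightarrow> \<not>E v u)"
    using T unfolding tournament_def by blast+
  have asym: "\<And>u v. E u v \<Longrightarrow> \<not> E v u"
  proof -
    fix u v assume "E u v"
    then have "u \<in> V" "v \<in> V" "u \<noteq> v" using arcV irr by auto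
    then show "\<not> E v u" using tot \<open>E u v\<close> by metis
  qed
  have comp: "\<And>u v. u \<in> V \<Longrightarrow> v \<in> V \<Longrightarrow> u \<noteq> v \<Longrightarrow> \<not> E u v \<Longrightarrow> E v u"
    using tot by metis
  have outdeg: "\<And>v. v \<in> V \<Longrightarrow> card {u\<in>V. E v u} = n"
  proof -
    fix v assume v: "v \<in> V"
    have "card {u\<in>V. E v u} + card {u\<in>V. E u v} = 2 * n"
      using card_out_in[OF fin irr tot v] assms(2) by simp
    moreover have "card {u\<in>V. E v u} = card {u\<in>V. E u v}" using RG v unfolding regular_on_def by blast
    ultimately show "card {u\<in>V. E v u} = n" by linarith
  qed
  have indeg: "\<And>v. v \<in> V \<Longrightarrow> card {u\<in>V. E u v} = n"
  proof -
    fix v assume v: "v \<in> V"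
    have "card {u\<in>V. E v u} + card {u\<in>V. E u v} = 2 * n"
      using card_out_in[OF fin irr tot v] assms(2) by simp
    moreover have "card {u\<in>V. E v u} = card {u\<in>V. E u v}" using RG v unfolding regular_on_def by blast
    ultimately show "card {u\<in>V. E u v} = n" by linarith
  qed
  define k where "k = card S"
  have finS: "finite S" using fin assms(3) finite_subset by blast
  have xV: "x \<in> V" "x \<notin> S" and yV: "y \<in> V" "y \<notin> S" using assms(4,5) by auto
  define X where "X = {v\<in>V-S. E x v \<and> v\<noteq>y}"
  define Y where "Y = {v\<in>V-S. E v y \<and> v\<noteq>x}"
  define R where "R = V - S - {x,y} - X - Y"
  have XV: "X \<subseteq> V" "Y \<subseteq> V" "R \<subseteq> V" by (auto simp: X_def Y_def R_def)
  have finX: "finite X" "finite Y" "finite R" using XV fin finite_subset by blast+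
  have xX: "x \<notin> X" "y \<notin> X" "x \<notin> Y" "y \<notin> Y" using irr by (auto simp: X_def Y_def)
  have SX: "S \<inter> X = {}" "S \<inter> Y = {}" "S \<inter> R = {}" by (auto simp: X_def Y_def R_def)
  have RX: "R \<inter> X = {}" "R \<inter> Y = {}" "x \<notin> R" "y \<notin> R" by (auto simp: R_def)
  have memX: "\<And>v. v \<in> X \<longleftrightarrow> v \<in> V \<and> v \<notin> S \<and> E x v \<and> v \<noteq> y" by (auto simp: X_def)
  have memY: "\<And>v. v \<in> Y \<longleftrightarrow> v \<in> V \<and> v \<notin> S \<and> E v y \<and> v \<noteq> x" by (auto simp: Y_def)
  have memR: "\<And>w. w \<in> R \<longleftrightarrow> w \<in> V \<and> w \<notin> S \<and> w \<noteq> x \<and> w \<noteq> y \<and> w \<notin> X \<and> w \<notin> Y"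
    by (auto simp: R_def)
  have a_ge: "n \<le> card X + k + 1"
  proof -
    have "{u\<in>V. E x u} \<subseteq> X \<union> S \<union> {y}" by (auto simp: X_def)
    then have "card {u\<in>V. E x u} \<le> card (X \<union> S \<union> {y})"
      by (intro card_mono) (use finX finS in auto)
    also have "\<dots> \<le> card X + card S + 1"
      using card_Un_le[of "X \<union> S" "{y}"] card_Un_le[of X S] by simp
    finally show ?thesis using outdeg xV by (simp add: k_def)
  qed
  have b_ge: "n \<le> card Y + k + 1"
  proof -
    have "{u\<in>V. E u y} \<subseteq> Y \<union> S \<union> {x}" by (auto simp: Y_def)
    then have "card {u\<in>V. E u y} \<le> card (Y \<union> S \<union> {x})"
      by (intro card_mono) (use finX finS in auto)
    also have "\<dots> \<le> card Y + card S + 1"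
      using card_Un_le[of "Y \<union> S" "{x}"] card_Un_le[of Y S] by simp
    finally show ?thesis using indeg yV by (simp add: k_def)
  qed
  have Vpart: "V = {x,y} \<union> S \<union> (X \<union> Y) \<union> R"
    using xV yV assms(3) XV by (auto simp: R_def)
  have cardV: "card V = 2 + k + card (X \<union> Y) + card R"
  proof -
    have "card ({x,y} \<union> S \<union> (X \<union> Y) \<union> R) = card {x,y} + card S + card (X \<union> Y) + card R"
      by (rule card_Un4) (use finX finS xV yV xX SX RX in auto)
    then show ?thesis using Vpart assms(6) by (simp add: k_def)
  qed
  have XYc: "card (X \<union> Y) + card (X \<inter> Y) = card X + card Y"
    using card_Un_Int[of X Y] finX by simp
  have Dc: "card (X - Y) + card (X \<inter> Y) = card X"
  proof -
    have "card ((X - Y) \<union> (X \<inter> Y)) = card (X - Y) + card (X \<inter> Y)"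
      by (rule card_Un_disjoint) (use finX in auto)
    moreover have "(X - Y) \<union> (X \<inter> Y) = X" by auto
    ultimately show ?thesis by simp
  qed
  have Dc2: "card (Y - X) + card (X \<inter> Y) = card Y"
  proof -
    have "card ((Y - X) \<union> (X \<inter> Y)) = card (Y - X) + card (X \<inter> Y)"
      by (rule card_Un_disjoint) (use finX in auto)
    moreover have "(Y - X) \<union> (X \<inter> Y) = Y" by auto
    ultimately show ?thesis by simp
  qed
  have NP: "\<And>p q. \<not> has_path3 V E S x y \<Longrightarrow> p \<in> X \<Longrightarrow> q \<in> Y \<Longrightarrow> p \<noteq> q \<Longrightarrow> E q p"
  proof -
    fix p q assume np: "\<not> has_path3 V E S x y" and pq: "p \<in> X" "q \<in> Y" "p \<noteq> q"
    have "\<not> E p q"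
    proof
      assume Epq: "E p q"
      have d: "distinct [x,p,q,y]" using pq xX assms(6) by auto
      have st: "set [x,p,q,y] \<subseteq> V - S" using pq xV yV memX memY by auto
      have "E x p" "E q y" using pq memX memY by auto
      then have "has_path3 V E S x y" unfolding has_path3_def using d st Epq by blast
      then show False using np by simp
    qed
    then show "E q p" using comp pq XV by blast
  qed
  have XY1: "\<not> has_path3 V E S x y \<Longrightarrow> card (X \<inter> Y) \<le> 1"
  proof -
    assume np: "\<not> has_path3 V E S x y"
    have "\<forall>p\<in>X \<inter> Y. \<forall>q\<in>X \<inter> Y. p = q"
    proof (intro ballI)
      fix p q assume "p \<in> X \<inter> Y" "q \<in> X \<inter> Y"
      show "p = q"
      proof (rule ccontr)
        assume "p \<noteq> q"
        then have "E q p" "E p q" using NP[OF np] \<open>p \<in> X \<inter> Y\<close> \<open>q \<in> X \<inter> Y\<close> by auto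
        then show False using asym by blast
      qed
    qed
    then show ?thesis using card_le_Suc0_iff_eq[of "X \<inter> Y"] finX by auto
  qed
  have insub: "\<And>v Q. \<not> has_path3 V E S x y \<Longrightarrow> v \<in> X - Y \<Longrightarrow> (\<forall>q\<in>Q. E q v) \<Longrightarrow>
      {x,y} \<union> Y \<union> Q \<union> {u\<in>X-Y. E u v} \<subseteq> {u\<in>V. E u v}"
  proof -
    fix v Q assume np: "\<not> has_path3 V E S x y" and v: "v \<in> X - Y" and Q: "\<forall>q\<in>Q. E q v"
    have vV: "v \<in> V" "v \<notin> S" "v \<noteq> y" "v \<noteq> x" "E x v" using v memX xX by auto
    have "\<not> E v y" using v vV memY by auto
    then have Eyv: "E y v" using comp[of v y] vV yV by auto
    have EYv: "\<And>q. q \<in> Y \<Longrightarrow> E q v" using NP[OF np] v by auto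
    show "{x,y} \<union> Y \<union> Q \<union> {u\<in>X-Y. E u v} \<subseteq> {u\<in>V. E u v}"
      using vV Eyv EYv Q arcV by blast
  qed
  have outsub: "\<And>w Q. \<not> has_path3 V E S x y \<Longrightarrow> w \<in> Y - X \<Longrightarrow> (\<forall>q\<in>Q. E w q) \<Longrightarrow>
      {x,y} \<union> X \<union> Q \<union> {u\<in>Y-X. E w u} \<subseteq> {u\<in>V. E w u}"
  proof -
    fix w Q assume np: "\<not> has_path3 V E S x y" and w: "w \<in> Y - X" and Q: "\<forall>q\<in>Q. E w q"
    have wV: "w \<in> V" "w \<notin> S" "w \<noteq> y" "w \<noteq> x" "E w y" using w memY xX by auto
    have "\<not> E x w" using w wV memX by auto
    then have Ewx: "E w x" using comp[of x w] wV xV by auto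
    have EwX: "\<And>p. p \<in> X \<Longrightarrow> E w p" using NP[OF np] w by auto
    show "{x,y} \<union> X \<union> Q \<union> {u\<in>Y-X. E w u} \<subseteq> {u\<in>V. E w u}"
      using wV Ewx EwX Q arcV by blast
  qed
  have incard: "\<And>v Q. \<not> has_path3 V E S x y \<Longrightarrow> v \<in> X - Y \<Longrightarrow> Q \<subseteq> R \<Longrightarrow> (\<forall>q\<in>Q. E q v) \<Longrightarrow>
      2 + card Y + card Q + card {u\<in>X-Y. E u v} \<le> n"
  proof -
    fix v Q assume np: "\<not> has_path3 V E S x y" and v: "v \<in> X - Y" and QR: "Q \<subseteq> R" and Q: "\<forall>q\<in>Q. E q v"
    have finQ: "finite Q" using QR finX finite_subset by blast
    have "card ({x,y} \<union> Y \<union> Q \<union> {u\<in>X-Y. E u v}) = card {x,y} + card Y + card Q + card {u\<in>X-Y. E u v}"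
      by (rule card_Un4) (use finX finQ xX QR RX in auto)
    moreover have "card ({x,y} \<union> Y \<union> Q \<union> {u\<in>X-Y. E u v}) \<le> card {u\<in>V. E u v}"
      by (rule card_mono) (use fin insub[OF np v Q] in auto)
    ultimately show "2 + card Y + card Q + card {u\<in>X-Y. E u v} \<le> n"
      using indeg[of v] v XV assms(6) by auto
  qed
  have outcard: "\<And>w Q. \<not> has_path3 V E S x y \<Longrightarrow> w \<in> Y - X \<Longrightarrow> Q \<subseteq> R \<Longrightarrow> (\<forall>q\<in>Q. E w q) \<Longrightarrow>
      2 + card X + card Q + card {u\<in>Y-X. E w u} \<le> n"
  proof -
    fix w Q assume np: "\<not> has_path3 V E S x y" and w: "w \<in> Y - X" and QR: "Q \<subseteq> R" and Q: "\<forall>q\<in>Q. E w q"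
    have finQ: "finite Q" using QR finX finite_subset by blast
    have "card ({x,y} \<union> X \<union> Q \<union> {u\<in>Y-X. E w u}) = card {x,y} + card X + card Q + card {u\<in>Y-X. E w u}"
      by (rule card_Un4) (use finX finQ xX QR RX in auto)
    moreover have "card ({x,y} \<union> X \<union> Q \<union> {u\<in>Y-X. E w u}) \<le> card {u\<in>V. E w u}"
      by (rule card_mono) (use fin outsub[OF np w Q] in auto)
    ultimately show "2 + card X + card Q + card {u\<in>Y-X. E w u} \<le> n"
      using outdeg[of w] w XV assms(6) by auto
  qed
  have totV: "\<And>W. W \<subseteq> V \<Longrightarrow> \<forall>u\<in>W. \<forall>v\<in>W. u \<noteq> v \<longrightarrow> (E u v \<longleftrightarrow> \<not> E v u)"
    using tot_mono[OF tot] by blast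
  have bigv: "\<exists>v\<in>X - Y. card (X - Y) \<le> 2 * card {u\<in>X-Y. E u v} + 1" if "X - Y \<noteq> {}"
    by (rule exists_big_in) (use that finX irr totV[of "X - Y"] XV in auto)
  have bigw: "\<exists>w\<in>Y - X. card (Y - X) \<le> 2 * card {u\<in>Y-X. E w u} + 1" if "Y - X \<noteq> {}"
    by (rule exists_big_out) (use that finX irr totV[of "Y - X"] XV in auto)
  show ?thesis
  proof (intro conjI impI)
    assume H: "3 \<le> n \<and> 3 * card S \<le> n - 1"
    show "has_path3 V E S x y \<or> iso_to_family_G V E"
    proof (cases "has_path3 V E S x y")
      case True
      then show ?thesis by simp
    next
      case False
      note np = False
      have c1: "card (X \<inter> Y) \<le> 1" using XY1[OF np] .
      have "card (X - Y) \<ge> 1" using Dc c1 a_ge H k_def by linarith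
      then have "X - Y \<noteq> {}" by (cases "X - Y = {}") auto
      then obtain v0 where v0: "v0 \<in> X - Y" "card (X - Y) \<le> 2 * card {u\<in>X-Y. E u v0} + 1"
        using bigv by blast
      have "card (Y - X) \<ge> 1" using Dc2 c1 b_ge H k_def by linarith
      then have "Y - X \<noteq> {}" by (cases "Y - X = {}") auto
      then obtain w0 where w0: "w0 \<in> Y - X" "card (Y - X) \<le> 2 * card {u\<in>Y-X. E w0 u} + 1"
        using bigw by blast
      have i0: "2 + card Y + card {u\<in>X-Y. E u v0} \<le> n"
        using incard[OF np v0(1), of "{}"] by simp
      have o0: "2 + card X + card {u\<in>Y-X. E w0 u} \<le> n"
        using outcard[OF np w0(1), of "{}"] by simp
      have nc: "card (X \<inter> Y) = 1" using i0 o0 v0(2) w0(2) c1 Dc Dc2 a_ge b_ge H k_def by linarith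
      have nn: "n = 3 * k + 1" using i0 o0 v0(2) w0(2) c1 Dc Dc2 a_ge b_ge H k_def by linarith
      have na: "card X = 2 * k" using i0 o0 v0(2) w0(2) c1 Dc Dc2 a_ge b_ge H k_def by linarith
      have nb: "card Y = 2 * k" using i0 o0 v0(2) w0(2) c1 Dc Dc2 a_ge b_ge H k_def by linarith
      have k1: "k \<ge> 1" using nn H by linarith
      then obtain m where km: "k = Suc m" by (cases k) auto
      have cardR: "card R = k + 2" using cardV XYc nc na nb nn assms(2) by linarith
      obtain z where z: "X \<inter> Y = {z}" using card_1_singletonE[OF nc] by blast
      define A where "A = X - Y"
      define C where "C = Y - X"
      have AX: "A \<subseteq> X" "C \<subseteq> Y" "A \<inter> Y = {}" "C \<inter> X = {}" by (auto simp: A_def C_def)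
      have AV: "A \<subseteq> V" "C \<subseteq> V" using AX XV by auto
      have finA: "finite A" "finite C" using AX finX finite_subset by blast+
      have cardA: "card A = 2 * m + 1" using Dc nc na km A_def by simp
      have cardC: "card C = 2 * m + 1" using Dc2 nc nb km C_def by simp
      have zX: "z \<in> X" "z \<in> Y" using z by auto
      have zV: "z \<in> V" "z \<notin> S" "z \<noteq> x" "z \<noteq> y" "z \<notin> R" "z \<notin> A" "z \<notin> C"
        using zX memX memY RX by (auto simp: A_def C_def)
      have XYsplit: "X \<union> Y = A \<union> C \<union> {z}" using z by (auto simp: A_def C_def)
      have inA_le: "\<And>v. v \<in> A \<Longrightarrow> card {u\<in>A. E u v} \<le> m"
      proof -
        fix v assume v: "v \<in> A"
        have "2 + card Y + card ({}::'a set) + card {u\<in>X-Y. E u v} \<le> n"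
          by (rule incard[OF np]) (use v A_def in auto)
        then show "card {u\<in>A. E u v} \<le> m" using nb nn km A_def by simp
      qed
      have sumA: "2 * (\<Sum>v\<in>A. card {u\<in>A. E u v}) = card A * (card A - 1)"
        using tour_sum[OF finA(1) irr totV[OF AV(1)]] .
      have inA_eq: "\<And>v. v \<in> A \<Longrightarrow> card {u\<in>A. E u v} = m"
      proof (rule ccontr)
        fix v assume v: "v \<in> A" and ne: "card {u\<in>A. E u v} \<noteq> m"
        then have lt: "card {u\<in>A. E u v} < m" using inA_le[OF v] by simp
        have "(\<Sum>v\<in>A. card {u\<in>A. E u v}) < (\<Sum>v\<in>A. m)"
          by (rule sum_strict_mono_ex1) (use finA inA_le v lt in auto)
        then have "(\<Sum>v\<in>A. card {u\<in>A. E u v}) < (2 * m + 1) * m" using cardA by simp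
        then have "2 * (\<Sum>v\<in>A. card {u\<in>A. E u v}) < (2 * m + 1) * (2 * m)" by simp
        then show False using sumA cardA by simp
      qed
      have inset_eq: "\<And>v. v \<in> A \<Longrightarrow> {u\<in>V. E u v} = {x,y} \<union> Y \<union> {} \<union> {u\<in>A. E u v}"
      proof -
        fix v assume v: "v \<in> A"
        have sub: "{x,y} \<union> Y \<union> {} \<union> {u\<in>A. E u v} \<subseteq> {u\<in>V. E u v}"
          using insub[OF np, of v "{}"] v A_def by simp
        have "card ({x,y} \<union> Y \<union> {} \<union> {u\<in>A. E u v}) = card {x,y} + card Y + card ({}::'a set) + card {u\<in>A. E u v}"
          by (rule card_Un4) (use finX finA xX AX in auto)
        then have "card ({x,y} \<union> Y \<union> {} \<union> {u\<in>A. E u v}) = card {u\<in>V. E u v}"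
          using inA_eq[OF v] indeg[OF subsetD[OF AV(1) v]] assms(6) nb nn km by simp
        then show "{u\<in>V. E u v} = {x,y} \<union> Y \<union> {} \<union> {u\<in>A. E u v}"
          using card_subset_eq[OF _ sub] fin by simp
      qed
      have domA: "\<And>v u. v \<in> A \<Longrightarrow> u \<in> R \<union> S \<Longrightarrow> E v u"
      proof -
        fix v u assume v: "v \<in> A" and u: "u \<in> R \<union> S"
        have "u \<notin> {x,y} \<union> Y \<union> {} \<union> {u\<in>A. E u v}"
          using u RX SX AX xV yV by auto
        then have "\<not> E u v" using inset_eq[OF v] u XV assms(3) by blast
        moreover have "u \<noteq> v" using u v AX RX SX by auto
        moreover have "u \<in> V" "v \<in> V" using u v XV AV assms(3) by blast+
        ultimately show "E v u" using comp[of u v] by blast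
      qed
      have regA: "regular_on A E" unfolding regular_on_def
      proof
        fix v assume v: "v \<in> A"
        have "card {u\<in>A. E v u} + card {u\<in>A. E u v} = card A - 1"
          using card_out_in[OF finA(1) irr totV[OF AV(1)] v] .
        then show "card {u\<in>A. E v u} = card {u\<in>A. E u v}" using inA_eq[OF v] cardA by simp
      qed
      have outC_le: "\<And>w. w \<in> C \<Longrightarrow> card {u\<in>C. E w u} \<le> m"
      proof -
        fix w assume w: "w \<in> C"
        have "2 + card X + card ({}::'a set) + card {u\<in>Y-X. E w u} \<le> n"
          by (rule outcard[OF np]) (use w C_def in auto)
        then show "card {u\<in>C. E w u} \<le> m" using na nn km C_def by simp
      qed
      have sumC: "2 * (\<Sum>v\<in>C. card {u\<in>C. E v u}) = card C * (card C - 1)"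
        using tour_sum_out[OF finA(2) irr totV[OF AV(2)]] .
      have outC_eq: "\<And>w. w \<in> C \<Longrightarrow> card {u\<in>C. E w u} = m"
      proof (rule ccontr)
        fix w assume w: "w \<in> C" and ne: "card {u\<in>C. E w u} \<noteq> m"
        then have lt: "card {u\<in>C. E w u} < m" using outC_le[OF w] by simp
        have "(\<Sum>v\<in>C. card {u\<in>C. E v u}) < (\<Sum>v\<in>C. m)"
          by (rule sum_strict_mono_ex1) (use finA outC_le w lt in auto)
        then have "(\<Sum>v\<in>C. card {u\<in>C. E v u}) < (2 * m + 1) * m" using cardC by simp
        then have "2 * (\<Sum>v\<in>C. card {u\<in>C. E v u}) < (2 * m + 1) * (2 * m)" by simp
        then show False using sumC cardC by simp
      qed
      have outset_eq: "\<And>w. w \<in> C \<Longrightarrow> {u\<in>V. E w u} = {x,y} \<union> X \<union> {} \<union> {u\<in>C. E w u}"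
      proof -
        fix w assume w: "w \<in> C"
        have sub: "{x,y} \<union> X \<union> {} \<union> {u\<in>C. E w u} \<subseteq> {u\<in>V. E w u}"
          using outsub[OF np, of w "{}"] w C_def by simp
        have "card ({x,y} \<union> X \<union> {} \<union> {u\<in>C. E w u}) = card {x,y} + card X + card ({}::'a set) + card {u\<in>C. E w u}"
          by (rule card_Un4) (use finX finA xX AX in auto)
        then have "card ({x,y} \<union> X \<union> {} \<union> {u\<in>C. E w u}) = card {u\<in>V. E w u}"
          using outC_eq[OF w] outdeg[OF subsetD[OF AV(2) w]] assms(6) na nn km by simp
        then show "{u\<in>V. E w u} = {x,y} \<union> X \<union> {} \<union> {u\<in>C. E w u}"
          using card_subset_eq[OF _ sub] fin by simp
      qed
      have domC: "\<And>w u. w \<in> C \<Longrightarrow> u \<in> R \<union> S \<Longrightarrow> E u w"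
      proof -
        fix w u assume w: "w \<in> C" and u: "u \<in> R \<union> S"
        have "u \<notin> {x,y} \<union> X \<union> {} \<union> {u\<in>C. E w u}"
          using u RX SX AX xV yV by auto
        then have "\<not> E w u" using outset_eq[OF w] u XV assms(3) by blast
        moreover have "u \<noteq> w" using u w AX RX SX by auto
        moreover have "u \<in> V" "w \<in> V" using u w XV AV assms(3) by blast+
        ultimately show "E u w" using comp[of w u] by blast
      qed
      have regC: "regular_on C E" unfolding regular_on_def
      proof
        fix v assume v: "v \<in> C"
        have "card {u\<in>C. E v u} + card {u\<in>C. E u v} = card C - 1"
          using card_out_in[OF finA(2) irr totV[OF AV(2)] v] .
        then show "card {u\<in>C. E v u} = card {u\<in>C. E u v}" using outC_eq[OF v] cardC by simp
      qed
      have Nx: "{u\<in>V. E x u} = X \<union> S \<union> {y}"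
      proof -
        have sub: "{u\<in>V. E x u} \<subseteq> X \<union> S \<union> {y}" by (auto simp: X_def)
        have "card (X \<union> S \<union> {y}) = card X + card S + card {y}"
          by (rule card_Un3) (use finX finS SX xX yV in auto)
        then have "card {u\<in>V. E x u} = card (X \<union> S \<union> {y})"
          using outdeg[OF xV(1)] na nn k_def by simp
        then show ?thesis using card_subset_eq[OF _ sub] finX finS by simp
      qed
      have Ny: "{u\<in>V. E u y} = Y \<union> S \<union> {x}"
      proof -
        have sub: "{u\<in>V. E u y} \<subseteq> Y \<union> S \<union> {x}" by (auto simp: Y_def)
        have "card (Y \<union> S \<union> {x}) = card Y + card S + card {x}"
          by (rule card_Un3) (use finX finS SX xX xV in auto)
        then have "card {u\<in>V. E u y} = card (Y \<union> S \<union> {x})"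
          using indeg[OF yV(1)] nb nn k_def by simp
        then show ?thesis using card_subset_eq[OF _ sub] finX finS by simp
      qed
      have Exy: "E x y" using Nx by blast
      have ExS: "\<And>s. s \<in> S \<Longrightarrow> E x s" using Nx by blast
      have ESy: "\<And>s. s \<in> S \<Longrightarrow> E s y" using Ny by blast
      have Exz: "E x z" and Ezy: "E z y" using zX memX memY by auto
      have ECz: "\<And>c. c \<in> C \<Longrightarrow> E c z" using NP[OF np] zX AX zV by auto
      have EzA: "\<And>a. a \<in> A \<Longrightarrow> E z a" using NP[OF np] zX AX zV by auto
      have ECA: "\<And>c a. c \<in> C \<Longrightarrow> a \<in> A \<Longrightarrow> E c a" using NP[OF np] AX by blast
      have EyA: "\<And>a. a \<in> A \<Longrightarrow> E y a" using inset_eq by blast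
      have ECx: "\<And>c. c \<in> C \<Longrightarrow> E c x" using outset_eq by blast
      have EyR: "\<And>w. w \<in> R \<Longrightarrow> E y w"
      proof -
        fix w assume w: "w \<in> R"
        then have "\<not> E w y" "w \<noteq> y" "w \<in> V" using memR memY by auto
        then show "E y w" using comp[of w y] yV by auto
      qed
      have ERx: "\<And>w. w \<in> R \<Longrightarrow> E w x"
      proof -
        fix w assume w: "w \<in> R"
        then have "\<not> E x w" "w \<noteq> x" "w \<in> V" using memR memX by auto
        then show "E w x" using comp[of x w] xV by auto
      qed
      define W where "W = {z} \<union> R \<union> S"
      have WV: "W \<subseteq> V" using zV XV assms(3) by (auto simp: W_def)
      have finW: "finite W" using WV fin finite_subset by blast
      have cardW: "card W = 2 * k + 3"
      proof -
        have "card ({z} \<union> R \<union> S) = card {z} + card R + card S"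
          by (rule card_Un3) (use finX finS zV SX in auto)
        then show ?thesis using cardR k_def W_def by simp
      qed
      have VW: "V - W = {x,y} \<union> A \<union> C"
      proof -
        have "V = {x,y} \<union> S \<union> (A \<union> C \<union> {z}) \<union> R" using Vpart XYsplit by simp
        moreover have "{x,y} \<inter> W = {}" "A \<inter> W = {}" "C \<inter> W = {}"
          using xX RX SX zV AX xV yV by (auto simp: W_def)
        ultimately show ?thesis by (auto simp: W_def)
      qed
      have outW: "\<And>w. w \<in> W \<Longrightarrow> card {u\<in>W. E w u} = k + 1"
      proof -
        fix w assume w: "w \<in> W"
        have wV: "w \<in> V" using w WV by auto
        have split: "{u\<in>V. E w u} = {u\<in>W. E w u} \<union> {u\<in>V-W. E w u}" using WV by auto
        have "card ({u\<in>W. E w u} \<union> {u\<in>V-W. E w u}) = card {u\<in>W. E w u} + card {u\<in>V-W. E w u}"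
          by (rule card_Un_disjoint) (use finW fin in auto)
        then have sp: "card {u\<in>W. E w u} + card {u\<in>V-W. E w u} = n"
          using split outdeg[OF wV] by simp
        have yA: "y \<notin> A" "x \<notin> C" using xX AX by auto
        have "card {u\<in>V-W. E w u} = 2 * k"
        proof -
          consider "w = z" | "w \<in> R" | "w \<in> S" using w W_def by auto
          then show ?thesis
          proof cases
            case 1
            have "\<not> E z x" using asym Exz by blast
            moreover have "\<forall>c\<in>C. \<not> E z c" using asym ECz by blast
            ultimately have "{u\<in>V-W. E w u} = {y} \<union> A" using 1 VW Ezy EzA by auto
            then show ?thesis using yA cardA finA km by simp
          next
            case 2
            have "\<not> E w y" using asym EyR 2 by blast
            moreover have "\<forall>a\<in>A. \<not> E w a" using asym domA 2 by blast
            moreover have "\<forall>c\<in>C. E w c" using domC 2 by blast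
            ultimately have "{u\<in>V-W. E w u} = {x} \<union> C" using VW ERx 2 by auto
            then show ?thesis using yA cardC finA km by simp
          next
            case 3
            have "\<not> E w x" using asym ExS 3 by blast
            moreover have "\<forall>a\<in>A. \<not> E w a" using asym domA 3 by blast
            moreover have "\<forall>c\<in>C. E w c" using domC 3 by blast
            ultimately have "{u\<in>V-W. E w u} = {y} \<union> C" using VW ESy 3 by auto
            moreover have "y \<notin> C" using xX AX by auto
            ultimately show ?thesis using cardC finA km by simp
          qed
        qed
        then show "card {u\<in>W. E w u} = k + 1" using sp nn by simp
      qed
      have regW: "regular_on ({z} \<union> R \<union> S) E" unfolding regular_on_def W_def[symmetric]
      proof
        fix w assume w: "w \<in> W"
        have "card {u\<in>W. E w u} + card {u\<in>W. E u w} = card W - 1"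
          using card_out_in[OF finW irr totV[OF WV] w] .
        then show "card {u\<in>W. E w u} = card {u\<in>W. E u w}" using outW[OF w] cardW by simp
      qed
      have G: "in_family_G V E"
        unfolding in_family_G_def
      proof (intro conjI exI)
        show "regular_tournament V E" by (rule assms(1))
        show "9 \<le> 6 * k + 3" using k1 by simp
        show "card V = 6 * k + 3" using assms(2) nn by simp
        show "V = {x, y, z} \<union> A \<union> R \<union> C \<union> S" using Vpart XYsplit by auto
        show "distinct [x, y, z]" using assms(6) zV by auto
        show "{x, y, z} \<inter> (A \<union> R \<union> C \<union> S) = {}" using xX RX SX zV AX xV yV by auto
        show "A \<inter> R = {}" "A \<inter> C = {}" "A \<inter> S = {}" "R \<inter> C = {}" "R \<inter> S = {}" "C \<inter> S = {}"
          using AX RX SX by auto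
        show "card A = 2 * k - 1" "card C = 2 * k - 1" "card R = k + 2" "card S = k"
          using cardA cardC cardR km k_def by auto
        show "regular_on A E" "regular_on C E" "regular_on ({z} \<union> R \<union> S) E"
          using regA regC regW by auto
        show "dominates E A (R \<union> S)" unfolding dominates_def using domA by blast
        show "dominates E (R \<union> S) C" unfolding dominates_def using domC by blast
        show "dominates E C A" unfolding dominates_def using ECA by blast
        show "dominates E C {z}" unfolding dominates_def using ECz by blast
        show "dominates E {z} A" unfolding dominates_def using EzA by blast
        show "dominates E {x} ({y, z} \<union> A \<union> S)" unfolding dominates_def
          using Exy Exz ExS AX memX by auto
        show "dominates E ({x, z} \<union> C \<union> S) {y}" unfolding dominates_def
          using Exy Ezy ESy AX memY by auto
        show "dominates E {y} (A \<union> R)" unfolding dominates_def using EyA EyR by blast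
        show "dominates E (R \<union> C) {x}" unfolding dominates_def using ERx ECx by blast
      qed
      then show ?thesis using family_iso by blast
    qed
  next
    assume H: "5 \<le> n \<and> 2 * card S \<le> n \<and> \<not> has_path3 V E S x y"
    then have np: "\<not> has_path3 V E S x y" by blast
    show "has_path4 V E S x y"
    proof (rule ccontr)
      assume np4: "\<not> has_path4 V E S x y"
      have NP4: "\<And>p q r. q \<in> R \<Longrightarrow> p \<in> X \<Longrightarrow> r \<in> Y \<Longrightarrow> E p q \<Longrightarrow> E q r \<Longrightarrow> False"
      proof -
        fix p q r assume pqr: "q \<in> R" "p \<in> X" "r \<in> Y" "E p q" "E q r"
        have "p \<noteq> r" using pqr(4,5) asym by blast
        then have d: "distinct [x,p,q,r,y]" using pqr(1-3) xX RX memR assms(6) by auto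
        have st: "set [x,p,q,r,y] \<subseteq> V - S" using pqr(1-3) xV yV memX memY memR by auto
        have "E x p" "E r y" using pqr memX memY by auto
        then have "has_path4 V E S x y" unfolding has_path4_def using d st pqr(4,5) by blast
        then show False using np4 by simp
      qed
      define R1 where "R1 = {q\<in>R. \<forall>p\<in>X. E q p}"
      define R2 where "R2 = {q\<in>R. \<forall>r\<in>Y. E r q}"
      have R12: "R \<subseteq> R1 \<union> R2"
      proof
        fix q assume q: "q \<in> R"
        show "q \<in> R1 \<union> R2"
        proof (cases "q \<in> R1")
          case True then show ?thesis by simp
        next
          case False
          then obtain p where p: "p \<in> X" "\<not> E q p" using q by (auto simp: R1_def)
          have "p \<noteq> q" using p q RX by auto
          then have Epq: "E p q" using comp[of q p] p q XV by auto
          have "\<forall>r\<in>Y. E r q"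
          proof
            fix r assume r: "r \<in> Y"
            have "\<not> E q r" using NP4[OF q p(1) r Epq] by blast
            moreover have "r \<noteq> q" using r q RX by auto
            ultimately show "E r q" using comp[of q r] r q XV by auto
          qed
          then show ?thesis using q by (auto simp: R2_def)
        qed
      qed
      have finR12: "finite R1" "finite R2" using finX by (auto simp: R1_def R2_def)
      have cR: "card R \<le> card R1 + card R2"
        using card_mono[OF _ R12] card_Un_le[of R1 R2] finR12 by fastforce
      have c1: "card (X \<inter> Y) \<le> 1" using XY1[OF np] .
      have "card (X - Y) \<ge> 1" using Dc c1 a_ge H k_def by linarith
      then have "X - Y \<noteq> {}" by (cases "X - Y = {}") auto
      then obtain v where v: "v \<in> X - Y" "card (X - Y) \<le> 2 * card {u\<in>X-Y. E u v} + 1"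
        using bigv by blast
      have "card (Y - X) \<ge> 1" using Dc2 c1 b_ge H k_def by linarith
      then have "Y - X \<noteq> {}" by (cases "Y - X = {}") auto
      then obtain w where w: "w \<in> Y - X" "card (Y - X) \<le> 2 * card {u\<in>Y-X. E w u} + 1"
        using bigw by blast
      have i1: "2 + card Y + card R1 + card {u\<in>X-Y. E u v} \<le> n"
        by (rule incard[OF np v(1)]) (use v(1) in \<open>auto simp: R1_def\<close>)
      have o1: "2 + card X + card R2 + card {u\<in>Y-X. E w u} \<le> n"
        by (rule outcard[OF np w(1)]) (use w(1) in \<open>auto simp: R2_def\<close>)
      show False using i1 o1 v(2) w(2) cR c1 Dc Dc2 XYc cardV assms(2) a_ge b_ge H k_def
        by linarith
    qed
  qed
qed

end
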